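(* Let $N=\begin{pmatrix}0&1&0\\0&0&1\\0&0&0\end{pmatrix}$, $\xi=(x,y,z)^T$, and $d\ge1$. Then the set $W_d=\{\hat e_3\,p(x,y):p\in P^2_d\}$, $\hat e_3=(0,0,1)^T$, is a complement in $V^3_d$ to $\mathrm{rng}(\mathrm{ad}_N)\cap V^3_d$, i.e. $V^3_d=(\mathrm{rng}(\mathrm{ad}_N)\cap V^3_d)\oplus W_d$, where $\mathrm{rng}(\mathrm{ad}_N)$ is the image of $\mathrm{ad}_N$ on $F^3_d$.
   Context: $P^2_d$ is the space of real homogeneous polynomials of degree $d$ in $(x,y)$. $F^3_d$ is the space of vector fields on $\mathbb{R}^3$ with components real homogeneous polynomials of degree $d$ in $(x,y,z)$, and $V^3_d=\{v\in F^3_d:\nabla\cdot v=0\}$. $\mathrm{ad}_N h(\xi)=Dh(\xi)N\xi-Nh(\xi)$. *)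

theory Defs
  imports "HOL-Analysis.Analysis"
begin

text \<open>Coordinates of \<xi> = (x,y,z) in R^3 are \<xi>$1, \<xi>$2, \<xi>$3.\<close>

definition P2 :: "nat \<Rightarrow> (real \<Rightarrow> real \<Rightarrow> real) set" where
  "P2 d = {p. \<exists>c :: nat \<Rightarrow> real. \<forall>x y. p x y = (\<Sum>i\<le>d. c i * x ^ i * y ^ (d - i))}"

definition hom_poly3 :: "nat \<Rightarrow> (real^3 \<Rightarrow> real) \<Rightarrow> bool" where
  "hom_poly3 d p \<longleftrightarrow> (\<exists>c :: nat \<Rightarrow> nat \<Rightarrow> real. \<forall>\<xi>.
     p \<xi> = (\<Sum>i\<le>d. \<Sum>j\<le>d - i. c i j * (\<xi>$1) ^ i * (\<xi>$2) ^ j * (\<xi>$3) ^ (d - i - j)))"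

definition F3 :: "nat \<Rightarrow> (real^3 \<Rightarrow> real^3) set" where
  "F3 d = {v. \<forall>k. hom_poly3 d (\<lambda>\<xi>. v \<xi> $ k)}"

definition divergence :: "(real^3 \<Rightarrow> real^3) \<Rightarrow> real^3 \<Rightarrow> real" where
  "divergence v \<xi> = (\<Sum>k\<in>UNIV. deriv (\<lambda>t. v (\<xi> + t *\<^sub>R axis k 1) $ k) 0)"

definition V3 :: "nat \<Rightarrow> (real^3 \<Rightarrow> real^3) set" where
  "V3 d = {v \<in> F3 d. \<forall>\<xi>. divergence v \<xi> = 0}"

definition Nmat :: "real^3^3" where
  "Nmat = vector [vector [0, 1, 0], vector [0, 0, 1], vector [0, 0, 0]]"

definition adN :: "(real^3 \<Rightarrow> real^3) \<Rightarrow> real^3 \<Rightarrow> real^3" where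
  "adN h \<xi> = frechet_derivative h (at \<xi>) (Nmat *v \<xi>) - Nmat *v h \<xi>"

definition Wd :: "nat \<Rightarrow> (real^3 \<Rightarrow> real^3) set" where
  "Wd d = {(\<lambda>\<xi>. p (\<xi>$1) (\<xi>$2) *\<^sub>R axis 3 1) | p. p \<in> P2 d}"

end

theory Submission
  imports Defs "HOL-Library.Function_Algebras"
begin


type_synonym cf = "nat \<Rightarrow> nat \<Rightarrow> nat \<Rightarrow> real"

definition dX :: "cf \<Rightarrow> cf" where "dX k = (\<lambda>a b c. real (Suc a) * k (Suc a) b c)"
definition dY :: "cf \<Rightarrow> cf" where "dY k = (\<lambda>a b c. real (Suc b) * k a (Suc b) c)"
definition dZ :: "cf \<Rightarrow> cf" where "dZ k = (\<lambda>a b c. real (Suc c) * k a b (Suc c))"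
definition mY :: "cf \<Rightarrow> cf" where "mY k = (\<lambda>a b c. if b = 0 then 0 else k a (b - 1) c)"
definition mZ :: "cf \<Rightarrow> cf" where "mZ k = (\<lambda>a b c. if c = 0 then 0 else k a b (c - 1))"
definition Lop :: "cf \<Rightarrow> cf" where
  "Lop k = (\<lambda>a b c. (if b = 0 then 0 else real (Suc a) * k (Suc a) (b - 1) c)
                   + (if c = 0 then 0 else real (Suc b) * k a (Suc b) (c - 1)))"
definition Dl :: "cf \<Rightarrow> cf" where
  "Dl k = (\<lambda>a b c. real (Suc b) * real (Suc (Suc b)) * k a (Suc (Suc b)) c
                   - 2 * (real (Suc a) * real (Suc c) * k (Suc a) b (Suc c)))"
definition xI :: "cf \<Rightarrow> cf" where "xI k = (\<lambda>a b c. if a = 0 then 0 else k (a - 1) b c / real a)"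
definition zdiv :: "cf \<Rightarrow> cf" where "zdiv k = (\<lambda>a b c. k a b (Suc c))"
definition sc :: "real \<Rightarrow> cf \<Rightarrow> cf" where "sc r k = (\<lambda>a b c. r * k a b c)"
definition homo :: "nat \<Rightarrow> cf \<Rightarrow> bool" where "homo d k \<longleftrightarrow> (\<forall>a b c. k a b c \<noteq> 0 \<longrightarrow> a + b + c = d)"
definition xfree :: "cf \<Rightarrow> bool" where "xfree k \<longleftrightarrow> (\<forall>a b c. a \<noteq> 0 \<longrightarrow> k a b c = 0)"
definition zfree :: "cf \<Rightarrow> bool" where "zfree k \<longleftrightarrow> (\<forall>a b c. c \<noteq> 0 \<longrightarrow> k a b c = 0)"
definition mono3 :: "nat \<Rightarrow> nat \<Rightarrow> nat \<Rightarrow> cf" where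
  "mono3 i j l = (\<lambda>a b c. if a = i \<and> b = j \<and> c = l then 1 else 0)"
definition Qp :: "nat \<Rightarrow> cf" where
  "Qp n = (\<lambda>a b c. if a = c \<and> b + 2 * a = 2 * n then (-2) ^ a * real (n choose a) else 0)"

lemma Lop_add: "Lop (k + m) = Lop k + Lop m"
  by (rule ext)+ (simp add: Lop_def algebra_simps)
lemma Lop_diff: "Lop (k - m) = Lop k - Lop m"
  by (rule ext)+ (simp add: Lop_def algebra_simps)
lemma Lop_sc: "Lop (sc r k) = sc r (Lop k)"
  by (rule ext)+ (simp add: Lop_def sc_def algebra_simps)
lemma Lop_zero: "Lop 0 = 0"
  by (rule ext)+ (simp add: Lop_def)
lemma dX_add: "dX (k + m) = dX k + dX m" by (rule ext)+ (simp add: dX_def algebra_simps)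
lemma dY_add: "dY (k + m) = dY k + dY m" by (rule ext)+ (simp add: dY_def algebra_simps)
lemma dZ_add: "dZ (k + m) = dZ k + dZ m" by (rule ext)+ (simp add: dZ_def algebra_simps)
lemma dX_diff: "dX (k - m) = dX k - dX m" by (rule ext)+ (simp add: dX_def algebra_simps)
lemma dY_diff: "dY (k - m) = dY k - dY m" by (rule ext)+ (simp add: dY_def algebra_simps)
lemma dZ_diff: "dZ (k - m) = dZ k - dZ m" by (rule ext)+ (simp add: dZ_def algebra_simps)

lemma dX_Lop: "dX (Lop k) = Lop (dX k)"
  by (rule ext)+ (simp add: dX_def Lop_def algebra_simps)
lemma dY_Lop: "dY (Lop k) = Lop (dY k) + dX k"
  by (rule ext)+ (auto simp add: dX_def dY_def Lop_def algebra_simps)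
lemma dZ_Lop: "dZ (Lop k) = Lop (dZ k) + dY k"
  by (rule ext)+ (auto simp add: dZ_def dY_def Lop_def algebra_simps)
lemma Dl_Lop: "Dl (Lop k) = Lop (Dl k)"
  by (rule ext)+ (auto simp add: Dl_def Lop_def algebra_simps)
lemma Lop_mZ: "Lop (mZ k) = mZ (Lop k)"
  by (rule ext)+ (auto simp add: mZ_def Lop_def algebra_simps)
lemma Lop_mY: "Lop (mY k) = mZ k + mY (Lop k)"
  by (rule ext)+ (auto simp add: mZ_def mY_def Lop_def algebra_simps)
lemma dX_xI: "dX (xI k) = k"
  by (rule ext)+ (simp add: dX_def xI_def)
lemma dZ_dX: "dZ (dX k) = dX (dZ k)"
  by (rule ext)+ (simp add: dX_def dZ_def)
lemma Lop_000: "Lop k 0 0 0 = 0"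
  by (simp add: Lop_def)
lemma binom_step: "Suc a * (n choose Suc a) = (n - a) * (n choose a)"
  using binomial_absorption[of a n] binomial_absorb_comp[of n a] by simp

lemma binom_step_real: "real (Suc a) * real (n choose Suc a) = real (n - a) * real (n choose a)"
  using binom_step[of a n] by (metis of_nat_mult)

lemma Lop_Qp: "Lop (Qp n) = 0"
proof (intro ext)
  fix a b c
  show "Lop (Qp n) a b c = 0 a b c"
  proof (cases "b \<noteq> 0 \<and> c = Suc a \<and> b + 2 * a + 1 = 2 * n")
    case True
    then obtain b' where b: "b = Suc b'" by (cases b) auto
    have e: "real (Suc b) = 2 * real (n - a)" using True b by simp
    have "Lop (Qp n) a b c = real (Suc a) * ((-2) ^ Suc a * real (n choose Suc a))
          + real (Suc b) * ((-2) ^ a * real (n choose a))"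
      using True b by (simp add: Lop_def Qp_def)
    also have "\<dots> = (-2) ^ a * (- 2 * (real (Suc a) * real (n choose Suc a)) + real (Suc b) * real (n choose a))"
      by (simp add: algebra_simps)
    also have "\<dots> = 0" unfolding binom_step_real e by (simp add: algebra_simps)
    finally show ?thesis by simp
  next
    case False
    then show ?thesis
      by (cases b; cases c) (auto simp add: Lop_def Qp_def; presburger)+
  qed
qed


lemma dX_pow_Lop: "(dX ^^ n) (Lop k) = Lop ((dX ^^ n) k)"
  by (induction n) (simp_all add: dX_Lop)
lemma Dl_pow_Lop: "(Dl ^^ n) (Lop k) = Lop ((Dl ^^ n) k)"
  by (induction n) (simp_all add: Dl_Lop)
lemma dY_LL: "dY (Lop (Lop m)) = Lop ((Lop (dY m) + dX m) + dX m)"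
  by (simp only: dY_Lop dX_Lop Lop_add)

lemma dX_pow: "(dX ^^ n) k = (\<lambda>a b c. pochhammer (real (Suc a)) n * k (a + n) b c)"
proof (induction n)
  case 0 then show ?case by simp
next
  case (Suc n)
  have "(dX ^^ Suc n) k = dX ((dX ^^ n) k)" by simp
  also have "\<dots> = dX (\<lambda>a b c. pochhammer (real (Suc a)) n * k (a + n) b c)" by (simp only: Suc)
  also have "\<dots> = (\<lambda>a b c. pochhammer (real (Suc a)) (Suc n) * k (a + Suc n) b c)"
    by (rule ext)+ (simp add: dX_def pochhammer_rec algebra_simps)
  finally show ?case .
qed
lemma dY_pow: "(dY ^^ n) k = (\<lambda>a b c. pochhammer (real (Suc b)) n * k a (b + n) c)"
proof (induction n)
  case 0 then show ?case by simp
next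
  case (Suc n)
  have "(dY ^^ Suc n) k = dY ((dY ^^ n) k)" by simp
  also have "\<dots> = dY (\<lambda>a b c. pochhammer (real (Suc b)) n * k a (b + n) c)" by (simp only: Suc)
  also have "\<dots> = (\<lambda>a b c. pochhammer (real (Suc b)) (Suc n) * k a (b + Suc n) c)"
    by (rule ext)+ (simp add: dY_def pochhammer_rec algebra_simps)
  finally show ?case .
qed

lemma zfree_dX: "zfree p \<Longrightarrow> zfree (dX p)" by (simp add: zfree_def dX_def)
lemma zfree_dY: "zfree p \<Longrightarrow> zfree (dY p)" by (simp add: zfree_def dY_def)
lemma zfree_dY_pow: "zfree p \<Longrightarrow> zfree ((dY ^^ n) p)" by (induction n) (simp_all add: zfree_dY)
lemma zfree_Dl: "zfree p \<Longrightarrow> Dl p = dY (dY p)"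
  by (rule ext)+ (simp add: zfree_def Dl_def dY_def)
lemma zfree_Dl_pow: "zfree p \<Longrightarrow> (Dl ^^ k) p = (dY ^^ (2 * k)) p"
proof (induction k)
  case 0 then show ?case by simp
next
  case (Suc k)
  have "(Dl ^^ Suc k) p = Dl ((dY ^^ (2 * k)) p)" using Suc by simp
  also have "\<dots> = dY (dY ((dY ^^ (2 * k)) p))" by (rule zfree_Dl[OF zfree_dY_pow[OF Suc.prems]])
  finally show ?case by simp
qed


lemma funpow_add_apply: "(f ^^ m) ((f ^^ n) x) = (f ^^ (m + n)) x"
  by (simp add: funpow_add)

lemma eval_dXdY: "(dX ^^ a) ((dY ^^ b) p) 0 0 0 = fact a * fact b * p a b 0"
  by (simp add: dX_pow dY_pow pochhammer_fact)

lemma U_core: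
  assumes "Lop (Lop (Lop f)) = p" "zfree p"
  shows "p = 0"
proof (intro ext)
  fix a b c
  show "p a b c = 0 a b c"
  proof (cases "c = 0")
    case False
    then show ?thesis using assms(2) by (simp add: zfree_def)
  next
    case True
    define k where "k = b div 2"
    define e where "e = b mod 2"
    have b: "b = e + 2 * k" unfolding k_def e_def by simp
    define g where "g = (Dl ^^ k) f"
    have pg: "(Dl ^^ k) p = Lop (Lop (Lop g))"
      unfolding g_def assms(1)[symmetric] by (simp only: Dl_pow_Lop)
    have L0: "(dX ^^ a) ((dY ^^ e) ((Dl ^^ k) p)) 0 0 0 = 0"
    proof (cases "e = 0")
      case True
      then show ?thesis unfolding pg by (simp add: dX_pow_Lop Lop_000)
    next
      case False
      then have "e = 1" unfolding e_def by simp
      then show ?thesis unfolding pg by (simp add: dY_LL dX_pow_Lop Lop_000)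
    qed
    have "(dX ^^ a) ((dY ^^ e) ((Dl ^^ k) p)) 0 0 0 = fact a * fact b * p a b 0"
      unfolding zfree_Dl_pow[OF assms(2)] funpow_add_apply b[symmetric] by (rule eval_dXdY)
    with L0 True show ?thesis by simp
  qed
qed


section \<open>Homogeneity\<close>

lemma homo_Lop: "homo d k \<Longrightarrow> homo d (Lop k)"
  unfolding homo_def
proof (intro allI impI)
  fix a b c assume h: "\<forall>a b c. k a b c \<noteq> 0 \<longrightarrow> a + b + c = d" and ne: "Lop k a b c \<noteq> 0"
  show "a + b + c = d"
  proof (cases "b \<noteq> 0 \<and> k (Suc a) (b - 1) c \<noteq> 0")
    case True then show ?thesis using h[rule_format, of "Suc a" "b - 1" c] by simp
  next
    case False
    then have "c \<noteq> 0 \<and> k a (Suc b) (c - 1) \<noteq> 0" using ne by (auto simp: Lop_def split: if_splits)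
    then show ?thesis using h[rule_format, of a "Suc b" "c - 1"] by simp
  qed
qed
lemma homoD: "homo d k \<Longrightarrow> k a b c \<noteq> 0 \<Longrightarrow> a + b + c = d"
  unfolding homo_def by blast
lemma homo_dX: assumes h: "homo (Suc d) k" shows "homo d (dX k)"
  unfolding homo_def dX_def using homoD[OF h] by fastforce
lemma homo_dY: assumes h: "homo (Suc d) k" shows "homo d (dY k)"
  unfolding homo_def dY_def using homoD[OF h] by fastforce
lemma homo_dZ: assumes h: "homo (Suc d) k" shows "homo d (dZ k)"
  unfolding homo_def dZ_def using homoD[OF h] by fastforce
lemma homo_xI: assumes h: "homo d k" shows "homo (Suc d) (xI k)"
  unfolding homo_def xI_def using homoD[OF h] by (fastforce split: if_splits)
lemma homo_mY: assumes h: "homo d k" shows "homo (Suc d) (mY k)"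
  unfolding homo_def mY_def using homoD[OF h] by (fastforce split: if_splits)
lemma homo_mZ: assumes h: "homo d k" shows "homo (Suc d) (mZ k)"
  unfolding homo_def mZ_def using homoD[OF h] by (fastforce split: if_splits)
lemma homo_zdiv: assumes h: "homo (Suc d) k" shows "homo d (zdiv k)"
  unfolding homo_def zdiv_def using homoD[OF h] by fastforce
lemma homo_add: assumes h: "homo d k" and h2: "homo d m" shows "homo d (k + m)"
  unfolding homo_def plus_fun_apply using homoD[OF h] homoD[OF h2] by (metis add.right_neutral)
lemma homo_diff: assumes h: "homo d k" and h2: "homo d m" shows "homo d (k - m)"
  unfolding homo_def minus_apply using homoD[OF h] homoD[OF h2] by (metis diff_zero diff_self)
lemma homo_sc: assumes h: "homo d k" shows "homo d (sc r k)"
  unfolding homo_def sc_def using homoD[OF h] by fastforce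
lemma homo_zero: "homo d 0" unfolding homo_def by auto
lemma homo_mono: "homo (i + j + l) (mono3 i j l)" unfolding homo_def mono3_def by auto
lemma homo_Qp: "homo (2 * n) (Qp n)" unfolding homo_def Qp_def by (auto split: if_splits)

section \<open>x-free polynomials\<close>

lemma xfree_of_dX: "dX r = 0 \<Longrightarrow> xfree r"
  unfolding xfree_def
proof (intro allI impI)
  fix a b c assume "dX r = 0" "(a::nat) \<noteq> 0"
  then obtain a' where a: "a = Suc a'" by (cases a) auto
  have "dX r a' b c = 0" using \<open>dX r = 0\<close> by simp
  then show "r a b c = 0" unfolding dX_def a by simp
qed
lemma xfree_dY: "xfree r \<Longrightarrow> xfree (dY r)" by (simp add: xfree_def dY_def)
lemma xfree_dZ: "xfree r \<Longrightarrow> xfree (dZ r)" by (simp add: xfree_def dZ_def)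
lemma xfree_dY_pow: "xfree p \<Longrightarrow> xfree ((dY ^^ n) p)" by (induction n) (simp_all add: xfree_dY)
lemma xfree_Dl: "xfree p \<Longrightarrow> Dl p = dY (dY p)"
  by (rule ext)+ (simp add: xfree_def Dl_def dY_def)
lemma xfree_Dl_pow: "xfree p \<Longrightarrow> (Dl ^^ k) p = (dY ^^ (2 * k)) p"
proof (induction k)
  case 0 then show ?case by simp
next
  case (Suc k)
  have "(Dl ^^ Suc k) p = Dl ((dY ^^ (2 * k)) p)" using Suc by simp
  also have "\<dots> = dY (dY ((dY ^^ (2 * k)) p))" by (rule xfree_Dl[OF xfree_dY_pow[OF Suc.prems]])
  finally show ?case by simp
qed
definition Tz :: "cf \<Rightarrow> cf" where
  "Tz g = (\<lambda>a b c. if c = 0 then 0 else real (Suc b) * g a (Suc b) (c - 1))"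
lemma Lop_xfree: "xfree g \<Longrightarrow> Lop g = Tz g"
  by (rule ext)+ (simp add: xfree_def Lop_def Tz_def)
lemma xfree_Tz: "xfree g \<Longrightarrow> xfree (Tz g)"
  by (simp add: xfree_def Tz_def)
lemma xfree_Lop: "xfree g \<Longrightarrow> xfree (Lop g)"
  by (simp add: Lop_xfree xfree_Tz)
lemma Lop3_xfree: assumes "xfree g" shows "Lop (Lop (Lop g)) =
   (\<lambda>a b c. if 3 \<le> c then real (Suc b) * real (Suc (Suc b)) * real (Suc (Suc (Suc b))) * g a (b + 3) (c - 3) else 0)"
proof -
  have "Lop (Lop (Lop g)) = Tz (Tz (Tz g))"
    using assms by (simp add: Lop_xfree xfree_Tz)
  also have "\<dots> = (\<lambda>a b c. if 3 \<le> c then real (Suc b) * real (Suc (Suc b)) * real (Suc (Suc (Suc b))) * g a (b + 3) (c - 3) else 0)"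
    apply (rule ext)+
    subgoal for a b c by (cases "c \<le> 2") (auto simp: Tz_def numeral_3_eq_3 Suc_diff_Suc)
    done
  finally show ?thesis .
qed


lemma mY_zero: "mY 0 = 0" by (rule ext)+ (simp add: mY_def)
lemma mZ_zero: "mZ 0 = 0" by (rule ext)+ (simp add: mZ_def)
lemma mZ_inj: "mZ k = mZ m \<Longrightarrow> k = m"
proof (intro ext)
  fix a b c assume "mZ k = mZ m"
  then have "mZ k a b (Suc c) = mZ m a b (Suc c)" by simp
  then show "k a b c = m a b c" by (simp add: mZ_def)
qed
lemma mZ_zdiv: "(\<And>a b. N a b 0 = 0) \<Longrightarrow> mZ (zdiv N) = N"
  by (rule ext)+ (auto simp: mZ_def zdiv_def gr0_conv_Suc)
lemma mZ_sc: "mZ (sc r k) = sc r (mZ k)" by (rule ext)+ (simp add: mZ_def sc_def)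
lemma mZ_mono: "mZ (mono3 i j l) = mono3 i j (Suc l)" by (rule ext)+ (auto simp: mZ_def mono3_def)
lemma Lop3_mZ: "Lop (Lop (Lop (mZ k))) = mZ (Lop (Lop (Lop k)))" by (simp add: Lop_mZ)
lemma Lop3_sc: "Lop (Lop (Lop (sc r k))) = sc r (Lop (Lop (Lop k)))" by (simp add: Lop_sc)
lemma Lop3_add: "Lop (Lop (Lop (k + m))) = Lop (Lop (Lop k)) + Lop (Lop (Lop m))" by (simp add: Lop_add)
lemma Lop3_diff: "Lop (Lop (Lop (k - m))) = Lop (Lop (Lop k)) - Lop (Lop (Lop m))" by (simp add: Lop_diff)
lemma Lop3_Qp: "Lop (Lop (Lop (Qp n))) = 0" by (simp add: Lop_Qp Lop_zero)
lemma Lop3_yQp: "Lop (Lop (Lop (mY (Qp n)))) = 0" by (simp add: Lop_Qp Lop_zero Lop_mY Lop_mZ mY_zero mZ_zero)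
lemma Lop_two: "Lop (2 * k) = 2 * Lop k"
  by (rule ext)+ (simp add: Lop_def algebra_simps)
lemma mZ_two: "mZ (2 * k) = 2 * mZ k"
  by (rule ext)+ (simp add: mZ_def algebra_simps)
lemma Lop3_yyQp: "Lop (Lop (Lop (mY (mY (Qp n))))) = 0"
  by (simp add: Lop_Qp Lop_zero Lop_mY Lop_mZ mY_zero mZ_zero Lop_add Lop_two mZ_two)
lemma xfree_mono0: "xfree (mono3 0 j l)" by (simp add: xfree_def mono3_def)
lemma Lop3_mono: "Lop (Lop (Lop (mono3 0 (n + 3) 0))) = sc (real (Suc n) * real (Suc (Suc n)) * real (Suc (Suc (Suc n)))) (mono3 0 n 3)"
  unfolding Lop3_xfree[OF xfree_mono0]
  by (rule ext)+ (auto simp: mono3_def sc_def)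

definition N0 :: "nat \<Rightarrow> cf" where
  "N0 D = mono3 0 (Suc D) 0 - (if even (Suc D) then Qp (Suc D div 2) else mY (Qp (D div 2)))"
definition G0 :: "nat \<Rightarrow> cf" where "G0 D = zdiv (N0 D)"

lemma N0_c0: "N0 D a b 0 = 0"
  by (auto simp: N0_def mono3_def Qp_def mY_def)

lemma homo_N0: "homo (Suc D) (N0 D)"
proof -
  have "homo (Suc D) (if even (Suc D) then Qp (Suc D div 2) else mY (Qp (D div 2)))"
  proof (cases "even (Suc D)")
    case True
    then show ?thesis using homo_Qp[of "Suc D div 2"] by simp
  next
    case False
    then have "Suc D = Suc (2 * (D div 2))" by simp
    then show ?thesis using homo_mY[OF homo_Qp[of "D div 2"]] False by simp
  qed
  moreover have "homo (Suc D) (mono3 0 (Suc D) 0)" using homo_mono[of 0 "Suc D" 0] by simp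
  ultimately show ?thesis unfolding N0_def by (rule homo_diff[rotated])
qed

lemma G0_homo: "homo D (G0 D)"
  unfolding G0_def by (rule homo_zdiv[OF homo_N0])

lemma G0_Lop3:
  assumes "2 \<le> D"
  shows "Lop (Lop (Lop (G0 D))) = sc (real (D - 1) * real D * real (Suc D)) (mono3 0 (D - 2) 2)"
proof (rule mZ_inj)
  obtain n where n: "D = n + 2" using assms by (metis le_add_diff_inverse2)
  have "mZ (Lop (Lop (Lop (G0 D)))) = Lop (Lop (Lop (N0 D)))"
    unfolding Lop3_mZ[symmetric] G0_def using N0_c0 by (simp add: mZ_zdiv)
  also have "\<dots> = Lop (Lop (Lop (mono3 0 (Suc D) 0)))"
    unfolding N0_def Lop3_diff by (simp add: Lop3_Qp Lop3_yQp)
  also have "\<dots> = sc (real (Suc n) * real (Suc (Suc n)) * real (Suc (Suc (Suc n)))) (mono3 0 n 3)"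
    using Lop3_mono[of n] by (simp add: n numeral_3_eq_3)
  also have "\<dots> = mZ (sc (real (D - 1) * real D * real (Suc D)) (mono3 0 (D - 2) 2))"
    by (simp add: mZ_sc mZ_mono n numeral_3_eq_3 numeral_2_eq_2)
  finally show "mZ (Lop (Lop (Lop (G0 D)))) = mZ (sc (real (D - 1) * real D * real (Suc D)) (mono3 0 (D - 2) 2))" .
qed

definition N1 :: "nat \<Rightarrow> cf" where
  "N1 n = mono3 0 (2 * n + 2) 0 + sc (real n) (Qp (Suc n)) - sc (real (Suc n)) (mY (mY (Qp n)))"
definition G1 :: "nat \<Rightarrow> cf" where "G1 n = zdiv (zdiv (N1 n))"

lemma N1_c0: "N1 n a b 0 = 0"
  by (auto simp: N1_def mono3_def Qp_def mY_def sc_def)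

lemma N1_c1: "1 \<le> n \<Longrightarrow> N1 n a b 1 = 0"
  by (auto simp: N1_def mono3_def Qp_def mY_def sc_def algebra_simps)


lemma homo_N1: "homo (Suc (Suc (2 * n))) (N1 n)"
proof -
  have h1: "homo (Suc (Suc (2 * n))) (mono3 0 (2 * n + 2) 0)" using homo_mono[of 0 "2 * n + 2" 0] by simp
  have h2: "homo (Suc (Suc (2 * n))) (sc (real n) (Qp (Suc n)))" using homo_sc[OF homo_Qp[of "Suc n"]] by simp
  have h3: "homo (Suc (Suc (2 * n))) (sc (real (Suc n)) (mY (mY (Qp n))))"
    by (rule homo_sc[OF homo_mY[OF homo_mY[OF homo_Qp]]])
  show ?thesis unfolding N1_def by (rule homo_diff[OF homo_add[OF h1 h2] h3])
qed

lemma G1_homo: "homo (2 * n) (G1 n)"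
  unfolding G1_def by (rule homo_zdiv[OF homo_zdiv[OF homo_N1]])

lemma G1_Lop3:
  assumes "1 \<le> n"
  shows "Lop (Lop (Lop (G1 n))) = sc (real (2 * n) * real (Suc (2 * n)) * real (Suc (Suc (2 * n)))) (mono3 0 (2 * n - 1) 1)"
proof (rule mZ_inj, rule mZ_inj)
  obtain m where m: "n = Suc m" using assms by (cases n) auto
  have zz: "mZ (mZ (G1 n)) = N1 n"
  proof -
    have "mZ (zdiv (zdiv (N1 n))) = zdiv (N1 n)"
      by (rule mZ_zdiv) (simp add: zdiv_def N1_c1[OF assms, simplified])
    then show ?thesis unfolding G1_def using N1_c0 by (simp add: mZ_zdiv)
  qed
  have "mZ (mZ (Lop (Lop (Lop (G1 n))))) = Lop (Lop (Lop (N1 n)))"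
    unfolding Lop3_mZ[symmetric] zz ..
  also have "\<dots> = Lop (Lop (Lop (mono3 0 (2 * n + 2) 0)))"
    unfolding N1_def Lop3_diff Lop3_add Lop3_sc by (simp add: Lop3_Qp Lop3_yyQp sc_def zero_fun_def)
  also have "\<dots> = sc (real (Suc (2 * m + 1)) * real (Suc (Suc (2 * m + 1))) * real (Suc (Suc (Suc (2 * m + 1))))) (mono3 0 (2 * m + 1) 3)"
    using Lop3_mono[of "2 * m + 1"] by (simp add: m numeral_3_eq_3)
  also have "\<dots> = mZ (mZ (sc (real (2 * n) * real (Suc (2 * n)) * real (Suc (Suc (2 * n)))) (mono3 0 (2 * n - 1) 1)))"
    by (simp add: mZ_sc mZ_mono m numeral_3_eq_3)
  finally show "mZ (mZ (Lop (Lop (Lop (G1 n))))) = mZ (mZ (sc (real (2 * n) * real (Suc (2 * n)) * real (Suc (Suc (2 * n)))) (mono3 0 (2 * n - 1) 1)))" .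
qed


section \<open>The x-free case\<close>

lemma psi_odd:
  assumes "xfree r" "dZ r = Lop w" "D = Suc (2 * k)"
  shows "r 0 (D - 1) 1 = 0"
proof -
  have xs: "xfree (dZ r)" using assms(1) by (rule xfree_dZ)
  have "(Dl ^^ k) (dZ r) 0 0 0 = 0"
    unfolding assms(2) Dl_pow_Lop by (rule Lop_000)
  moreover have "(Dl ^^ k) (dZ r) 0 0 0 = fact (2 * k) * r 0 (2 * k) 1"
    unfolding xfree_Dl_pow[OF xs] dY_pow by (simp add: dZ_def pochhammer_fact)
  ultimately show ?thesis using assms(3) by simp
qed

definition g3 :: "cf \<Rightarrow> cf" where
  "g3 r = (\<lambda>a b c. if a = 0 \<and> 3 \<le> b then r 0 (b - 3) (c + 3) / (real b * real (b - 1) * real (b - 2)) else 0)"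

lemma xfree_g3: "xfree (g3 r)" by (simp add: xfree_def g3_def)

lemma Lop3_g3: "xfree r \<Longrightarrow> Lop (Lop (Lop (g3 r))) = (\<lambda>a b c. if 3 \<le> c then r a b c else 0)"
  unfolding Lop3_xfree[OF xfree_g3]
proof (intro ext)
  fix a b c
  assume xr: "xfree r"
  have e: "b + 3 - 1 = Suc (Suc b)" "b + 3 - 2 = Suc b" "b + 3 = Suc (Suc (Suc b))" by auto
  have key: "real (Suc b) * real (Suc (Suc b)) * real (Suc (Suc (Suc b))) *
      (x / (real (b + 3) * real (b + 3 - 1) * real (b + 3 - 2))) = x" for x
    unfolding e by (simp add: field_simps del: of_nat_Suc)
  show "(if 3 \<le> c then real (Suc b) * real (Suc (Suc b)) * real (Suc (Suc (Suc b))) * g3 r a (b + 3) (c - 3) else 0) =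
        (if 3 \<le> c then r a b c else 0)"
  proof (cases "3 \<le> c \<and> a = 0")
    case True
    then have "g3 r a (b + 3) (c - 3) = r 0 b c / (real (b + 3) * real (b + 3 - 1) * real (b + 3 - 2))"
      by (simp add: g3_def)
    then show ?thesis using True key by simp
  next
    case False
    then show ?thesis using xr by (auto simp: g3_def xfree_def)
  qed
qed

lemma homo_g3: assumes h: "homo D r" shows "homo D (g3 r)"
  unfolding homo_def
proof (intro allI impI)
  fix a b c assume "g3 r a b c \<noteq> 0"
  then have "a = 0" "3 \<le> b" "r 0 (b - 3) (c + 3) \<noteq> 0" unfolding g3_def by (auto split: if_splits)
  then show "a + b + c = D" using homoD[OF h, of 0 "b - 3" "c + 3"] by simp
qed

lemma xfree_good:
  assumes hr: "homo D r" and xr: "xfree r" and dz: "dZ r = Lop w" and D: "1 \<le> D"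
  shows "\<exists>g p. homo D g \<and> homo D p \<and> zfree p \<and> Lop (Lop (Lop g)) = r - p"
proof -
  define p where "p = (\<lambda>a b c. if c = 0 then r a b c else 0)"
  define \<rho>2 where "\<rho>2 = r 0 (D - 2) 2"
  define \<rho>1 where "\<rho>1 = r 0 (D - 1) 1"
  define K0 where "K0 = real (D - 1) * real D * real (Suc D)"
  define K1 where "K1 = real (2 * (D div 2)) * real (Suc (2 * (D div 2))) * real (Suc (Suc (2 * (D div 2))))"
  define A where "A = (if 2 \<le> D then sc (\<rho>2 / K0) (G0 D) else 0)"
  define B where "B = (if even D then sc (\<rho>1 / K1) (G1 (D div 2)) else 0)"
  define g where "g = g3 r + A + B"
  have hp: "homo D p" unfolding homo_def p_def using homoD[OF hr, of _ _ 0] by (auto split: if_splits)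
  have zp: "zfree p" unfolding zfree_def p_def by auto
  have hA: "homo D A" unfolding A_def by (simp add: homo_sc[OF G0_homo] homo_zero)
  have hB: "homo D B"
  proof (cases "even D")
    case True
    then have "homo D (G1 (D div 2))" using G1_homo[of "D div 2"] by simp
    then show ?thesis unfolding B_def using True by (simp add: homo_sc)
  qed (simp add: B_def homo_zero)
  have hg: "homo D g" unfolding g_def by (intro homo_add homo_g3 hr hA hB)
  have LA: "Lop (Lop (Lop A)) = (if 2 \<le> D then sc \<rho>2 (mono3 0 (D - 2) 2) else 0)"
  proof (cases "2 \<le> D")
    case True
    have "K0 \<noteq> 0" unfolding K0_def using True by simp
    have "Lop (Lop (Lop A)) = sc (\<rho>2 / K0) (sc K0 (mono3 0 (D - 2) 2))"
      unfolding A_def using True by (simp only: if_True Lop3_sc G0_Lop3 K0_def)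
    also have "\<dots> = sc \<rho>2 (mono3 0 (D - 2) 2)" using \<open>K0 \<noteq> 0\<close> by (simp add: sc_def)
    finally show ?thesis using True by simp
  qed (simp add: A_def Lop_zero)
  have LB: "Lop (Lop (Lop B)) = (if even D then sc \<rho>1 (mono3 0 (D - 1) 1) else 0)"
  proof (cases "even D")
    case True
    have n1: "1 \<le> D div 2" using True D by auto
    have DD: "2 * (D div 2) = D" using True by simp
    have "K1 \<noteq> 0" unfolding K1_def using n1 by simp
    have "Lop (Lop (Lop B)) = sc (\<rho>1 / K1) (sc K1 (mono3 0 (2 * (D div 2) - 1) 1))"
      unfolding B_def using True by (simp only: if_True Lop3_sc G1_Lop3[OF n1] K1_def)
    also have "\<dots> = sc \<rho>1 (mono3 0 (D - 1) 1)" using \<open>K1 \<noteq> 0\<close> by (simp add: sc_def DD)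
    finally show ?thesis using True by simp
  qed (simp add: B_def Lop_zero)
  have r1: "\<rho>1 = 0" if "odd D"
  proof -
    obtain k where "D = 2 * k + 1" using \<open>odd D\<close> by (rule oddE)
    then have "D = Suc (2 * k)" by simp
    then show ?thesis unfolding \<rho>1_def by (rule psi_odd[OF xr dz])
  qed
  have "Lop (Lop (Lop g)) = r - p"
  proof (intro ext)
    fix a b c
    have rz: "r a b c = 0" if "a \<noteq> 0 \<or> a + b + c \<noteq> D" using that hr xr unfolding homo_def xfree_def by blast
    have L3: "Lop (Lop (Lop g)) a b c = (if 3 \<le> c then r a b c else 0)
           + (if 2 \<le> D then sc \<rho>2 (mono3 0 (D - 2) 2) else 0) a b c
           + (if even D then sc \<rho>1 (mono3 0 (D - 1) 1) else 0) a b c"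
      unfolding g_def Lop3_add LA LB Lop3_g3[OF xr] by simp
    consider "c = 0" | "c = 1" | "c = 2" | "3 \<le> c" by linarith
    then show "Lop (Lop (Lop g)) a b c = (r - p) a b c"
    proof cases
      case 1 then show ?thesis unfolding L3 by (auto simp: p_def sc_def mono3_def)
    next
      case 2
      show ?thesis
      proof (cases "a = 0 \<and> b = D - 1")
        case True
        then show ?thesis using 2 r1 unfolding L3 by (auto simp: p_def sc_def mono3_def \<rho>1_def)
      next
        case False
        then have "r a b c = 0" using 2 rz by force
        then show ?thesis using 2 False unfolding L3 by (auto simp: p_def sc_def mono3_def)
      qed
    next
      case 3
      show ?thesis
      proof (cases "a = 0 \<and> b = D - 2 \<and> 2 \<le> D")
        case True
        then show ?thesis using 3 unfolding L3 by (auto simp: p_def sc_def mono3_def \<rho>2_def)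
      next
        case False
        then have "r a b c = 0" using 3 rz by force
        then show ?thesis using 3 False unfolding L3 by (auto simp: p_def sc_def mono3_def)
      qed
    next
      case 4 then show ?thesis unfolding L3 by (auto simp: p_def sc_def mono3_def)
    qed
  qed
  then show ?thesis using hg hp zp by blast
qed


section \<open>Existence\<close>

lemma zfree_dZ0: "zfree p \<Longrightarrow> dZ p = 0"
  by (rule ext)+ (simp add: zfree_def dZ_def)
lemma zfree_xI: "zfree p \<Longrightarrow> zfree (xI p)"
  by (simp add: zfree_def xI_def)
lemma zfree_add: "zfree p \<Longrightarrow> zfree q \<Longrightarrow> zfree (p + q)"
  by (simp add: zfree_def)
lemma homo0_zfree: "homo 0 u \<Longrightarrow> zfree u"
  unfolding zfree_def using homoD[of 0 u] by fastforce

lemma dZ_L3: "dZ (Lop (Lop (Lop F))) = Lop (dZ (Lop (Lop F)) + ((Lop (dY F) + dX F) + dX F))"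
  by (simp only: dZ_Lop[of "Lop (Lop F)"] dY_LL Lop_add)

lemma E_core:
  "homo d u \<Longrightarrow> dZ u = Lop w \<Longrightarrow> \<exists>f p. homo d f \<and> homo d p \<and> zfree p \<and> Lop (Lop (Lop f)) = u - p"
proof (induction d arbitrary: u w)
  case 0
  have "Lop (Lop (Lop (0::cf))) = u - u" by (simp add: Lop_zero)
  then show ?case using homo_zero[of 0] 0 homo0_zfree by blast
next
  case (Suc d)
  have h1: "homo d (dX u)" using Suc.prems(1) by (rule homo_dX)
  have h2: "dZ (dX u) = Lop (dX w)" by (simp add: dZ_dX Suc.prems(2) dX_Lop)
  obtain f' p' where f': "homo d f'" "homo d p'" "zfree p'" "Lop (Lop (Lop f')) = dX u - p'"
    using Suc.IH[OF h1 h2] by blast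
  define F where "F = xI f'"
  define P where "P = xI p'"
  define r where "r = u - Lop (Lop (Lop F)) - P"
  have hF: "homo (Suc d) F" unfolding F_def by (rule homo_xI[OF f'(1)])
  have hP: "homo (Suc d) P" unfolding P_def by (rule homo_xI[OF f'(2)])
  have zP: "zfree P" unfolding P_def by (rule zfree_xI[OF f'(3)])
  have hr: "homo (Suc d) r" unfolding r_def
    by (intro homo_diff Suc.prems(1) homo_Lop hF hP)
  have "dX r = dX u - Lop (Lop (Lop (dX F))) - dX P"
    unfolding r_def by (simp add: dX_diff dX_Lop)
  also have "\<dots> = 0" unfolding F_def P_def dX_xI f'(4) by simp
  finally have xr: "xfree r" by (rule xfree_of_dX)
  have "dZ r = Lop w - dZ (Lop (Lop (Lop F))) - dZ P"
    unfolding r_def by (simp add: dZ_diff Suc.prems(2))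
  also have "\<dots> = Lop (w - (dZ (Lop (Lop F)) + ((Lop (dY F) + dX F) + dX F)))"
    unfolding dZ_L3 zfree_dZ0[OF zP] by (simp add: Lop_diff)
  finally have dzr: "dZ r = Lop (w - (dZ (Lop (Lop F)) + ((Lop (dY F) + dX F) + dX F)))" .
  obtain g p2 where g: "homo (Suc d) g" "homo (Suc d) p2" "zfree p2" "Lop (Lop (Lop g)) = r - p2"
    using xfree_good[OF hr xr dzr] by auto
  have "Lop (Lop (Lop (F + g))) = u - (P + p2)"
    unfolding Lop3_add g(4) r_def by (simp add: algebra_simps)
  moreover have "homo (Suc d) (F + g)" by (rule homo_add[OF hF g(1)])
  moreover have "homo (Suc d) (P + p2)" by (rule homo_add[OF hP g(2)])
  moreover have "zfree (P + p2)" by (rule zfree_add[OF zP g(3)])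
  ultimately show ?case by blast
qed




definition EV :: "nat \<Rightarrow> cf \<Rightarrow> real^3 \<Rightarrow> real" where
  "EV n k \<xi> = (\<Sum>a\<le>n. \<Sum>b\<le>n. \<Sum>c\<le>n. k a b c * ((\<xi>$1) ^ a * (\<xi>$2) ^ b * (\<xi>$3) ^ c))"

lemma EV_add: "EV n (k + m) \<xi> = EV n k \<xi> + EV n m \<xi>"
  by (simp add: EV_def algebra_simps sum.distrib)
lemma EV_diff: "EV n (k - m) \<xi> = EV n k \<xi> - EV n m \<xi>"
  by (simp add: EV_def algebra_simps sum_subtractf)
lemma EV_zero: "EV n 0 \<xi> = 0"
  by (simp add: EV_def)
lemma EV_sc: "EV n (sc r k) \<xi> = r * EV n k \<xi>"
  by (simp add: EV_def sc_def sum_distrib_left algebra_simps)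

lemma vec_nth_deriv: "((\<lambda>\<xi>::real^3. \<xi> $ i) has_derivative (\<lambda>v. v $ i)) (at \<xi>)"
  by (rule bounded_linear_imp_has_derivative[OF bounded_linear_vec_nth])

lemma mon_deriv:
  "((\<lambda>\<xi>::real^3. (\<xi>$1) ^ a * (\<xi>$2) ^ b * (\<xi>$3) ^ c) has_derivative
    (\<lambda>v. v$1 * (real a * (\<xi>$1) ^ (a - 1) * (\<xi>$2) ^ b * (\<xi>$3) ^ c)
        + v$2 * (real b * (\<xi>$1) ^ a * (\<xi>$2) ^ (b - 1) * (\<xi>$3) ^ c)
        + v$3 * (real c * (\<xi>$1) ^ a * (\<xi>$2) ^ b * (\<xi>$3) ^ (c - 1)))) (at \<xi>)"
  apply (rule has_derivative_eq_rhs)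
   apply (rule has_derivative_mult has_derivative_power vec_nth_deriv)+
  apply (rule ext)
  apply (simp add: algebra_simps)
  done

lemma shift_sum:
  fixes g :: "nat \<Rightarrow> real"
  assumes "g (Suc n) = 0"
  shows "(\<Sum>a\<le>n. real a * g a * x ^ (a - 1)) = (\<Sum>a\<le>n. real (Suc a) * g (Suc a) * x ^ a)"
proof -
  let ?h = "\<lambda>a. real a * g a * x ^ (a - 1)"
  have "(\<Sum>a\<le>Suc n. ?h a) = ?h 0 + (\<Sum>a\<le>n. ?h (Suc a))" by (rule sum.atMost_Suc_shift)
  then show ?thesis using assms by simp
qed

lemma mult_sum:
  fixes g :: "nat \<Rightarrow> real"
  assumes "g n = 0"
  shows "x * (\<Sum>b\<le>n. g b * x ^ b) = (\<Sum>b\<le>n. (if b = 0 then 0 else g (b - 1)) * x ^ b)"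
proof (cases n)
  case 0 then show ?thesis using assms by simp
next
  case (Suc m)
  let ?h = "\<lambda>b. (if b = 0 then 0 else g (b - 1)) * x ^ b"
  have "(\<Sum>b\<le>Suc m. ?h b) = ?h 0 + (\<Sum>b\<le>m. ?h (Suc b))" by (rule sum.atMost_Suc_shift)
  also have "\<dots> = x * (\<Sum>b\<le>m. g b * x ^ b)" by (simp add: sum_distrib_left algebra_simps)
  also have "\<dots> = x * (\<Sum>b\<le>Suc m. g b * x ^ b)" using assms Suc by simp
  finally show ?thesis using Suc by simp
qed


definition supp3 :: "nat \<Rightarrow> cf \<Rightarrow> bool" where
  "supp3 n k \<longleftrightarrow> (\<forall>a b c. k a b c \<noteq> 0 \<longrightarrow> a \<le> n \<and> b \<le> n \<and> c \<le> n)"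

lemma homo_supp: "homo d k \<Longrightarrow> supp3 d k"
  unfolding supp3_def using homoD[of d k] by fastforce

lemma supp_out: "supp3 n k \<Longrightarrow> k (Suc n) b c = 0" "supp3 n k \<Longrightarrow> k a (Suc n) c = 0" "supp3 n k \<Longrightarrow> k a b (Suc n) = 0"
  unfolding supp3_def by (meson not_less_eq_eq order_refl)+

lemma D1_eq:
  assumes "supp3 n k"
  shows "(\<Sum>a\<le>n. \<Sum>b\<le>n. \<Sum>c\<le>n. k a b c * (real a * (\<xi>$1) ^ (a - 1) * (\<xi>$2) ^ b * (\<xi>$3) ^ c)) = EV n (dX k) \<xi>"
proof -
  define g where "g a = (\<Sum>b\<le>n. \<Sum>c\<le>n. k a b c * ((\<xi>$2) ^ b * (\<xi>$3) ^ c))" for a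
  have "(\<Sum>a\<le>n. \<Sum>b\<le>n. \<Sum>c\<le>n. k a b c * (real a * (\<xi>$1) ^ (a - 1) * (\<xi>$2) ^ b * (\<xi>$3) ^ c))
      = (\<Sum>a\<le>n. real a * g a * (\<xi>$1) ^ (a - 1))"
    unfolding g_def by (simp add: sum_distrib_left sum_distrib_right mult_ac)
  also have "\<dots> = (\<Sum>a\<le>n. real (Suc a) * g (Suc a) * (\<xi>$1) ^ a)"
    by (rule shift_sum) (simp add: g_def supp_out[OF assms])
  also have "\<dots> = EV n (dX k) \<xi>"
    unfolding g_def EV_def dX_def by (simp add: sum_distrib_left sum_distrib_right mult_ac)
  finally show ?thesis .
qed

lemma D2_eq:
  assumes "supp3 n k"
  shows "(\<Sum>a\<le>n. \<Sum>b\<le>n. \<Sum>c\<le>n. k a b c * (real b * (\<xi>$1) ^ a * (\<xi>$2) ^ (b - 1) * (\<xi>$3) ^ c)) = EV n (dY k) \<xi>"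
proof -
  define g where "g a b = (\<Sum>c\<le>n. k a b c * (\<xi>$3) ^ c)" for a b
  have "(\<Sum>a\<le>n. \<Sum>b\<le>n. \<Sum>c\<le>n. k a b c * (real b * (\<xi>$1) ^ a * (\<xi>$2) ^ (b - 1) * (\<xi>$3) ^ c))
      = (\<Sum>a\<le>n. (\<xi>$1) ^ a * (\<Sum>b\<le>n. real b * g a b * (\<xi>$2) ^ (b - 1)))"
    unfolding g_def by (simp add: sum_distrib_left sum_distrib_right mult_ac)
  also have "\<dots> = (\<Sum>a\<le>n. (\<xi>$1) ^ a * (\<Sum>b\<le>n. real (Suc b) * g a (Suc b) * (\<xi>$2) ^ b))"
    by (rule sum.cong[OF refl], subst shift_sum) (simp_all add: g_def supp_out[OF assms])
  also have "\<dots> = EV n (dY k) \<xi>"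
    unfolding g_def EV_def dY_def by (simp add: sum_distrib_left sum_distrib_right mult_ac)
  finally show ?thesis .
qed

lemma D3_eq:
  assumes "supp3 n k"
  shows "(\<Sum>a\<le>n. \<Sum>b\<le>n. \<Sum>c\<le>n. k a b c * (real c * (\<xi>$1) ^ a * (\<xi>$2) ^ b * (\<xi>$3) ^ (c - 1))) = EV n (dZ k) \<xi>"
proof -
  have "(\<Sum>a\<le>n. \<Sum>b\<le>n. \<Sum>c\<le>n. k a b c * (real c * (\<xi>$1) ^ a * (\<xi>$2) ^ b * (\<xi>$3) ^ (c - 1)))
      = (\<Sum>a\<le>n. \<Sum>b\<le>n. (\<xi>$1) ^ a * (\<xi>$2) ^ b * (\<Sum>c\<le>n. real c * k a b c * (\<xi>$3) ^ (c - 1)))"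
    by (simp add: sum_distrib_left sum_distrib_right mult_ac)
  also have "\<dots> = (\<Sum>a\<le>n. \<Sum>b\<le>n. (\<xi>$1) ^ a * (\<xi>$2) ^ b * (\<Sum>c\<le>n. real (Suc c) * k a b (Suc c) * (\<xi>$3) ^ c))"
    by (intro sum.cong refl, subst shift_sum) (simp_all add: supp_out[OF assms])
  also have "\<dots> = EV n (dZ k) \<xi>"
    unfolding EV_def dZ_def by (simp add: sum_distrib_left sum_distrib_right mult_ac)
  finally show ?thesis .
qed

lemma EV_deriv:
  assumes "supp3 n k"
  shows "(EV n k has_derivative (\<lambda>v. v$1 * EV n (dX k) \<xi> + v$2 * EV n (dY k) \<xi> + v$3 * EV n (dZ k) \<xi>)) (at \<xi>)"
proof -
  have "((\<lambda>\<xi>. \<Sum>a\<le>n. \<Sum>b\<le>n. \<Sum>c\<le>n. k a b c * ((\<xi>$1) ^ a * (\<xi>$2) ^ b * (\<xi>$3) ^ c)) has_derivative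
     (\<lambda>v. \<Sum>a\<le>n. \<Sum>b\<le>n. \<Sum>c\<le>n. k a b c * (v$1 * (real a * (\<xi>$1) ^ (a - 1) * (\<xi>$2) ^ b * (\<xi>$3) ^ c)
        + v$2 * (real b * (\<xi>$1) ^ a * (\<xi>$2) ^ (b - 1) * (\<xi>$3) ^ c)
        + v$3 * (real c * (\<xi>$1) ^ a * (\<xi>$2) ^ b * (\<xi>$3) ^ (c - 1))))) (at \<xi>)"
    by (intro has_derivative_sum has_derivative_mult_right mon_deriv)
  moreover have "(\<Sum>a\<le>n. \<Sum>b\<le>n. \<Sum>c\<le>n. k a b c * (v$1 * (real a * (\<xi>$1) ^ (a - 1) * (\<xi>$2) ^ b * (\<xi>$3) ^ c)
        + v$2 * (real b * (\<xi>$1) ^ a * (\<xi>$2) ^ (b - 1) * (\<xi>$3) ^ c)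
        + v$3 * (real c * (\<xi>$1) ^ a * (\<xi>$2) ^ b * (\<xi>$3) ^ (c - 1))))
     = v$1 * EV n (dX k) \<xi> + v$2 * EV n (dY k) \<xi> + v$3 * EV n (dZ k) \<xi>" for v :: "real^3"
      unfolding D1_eq[OF assms, symmetric] D2_eq[OF assms, symmetric] D3_eq[OF assms, symmetric]
      by (simp add: sum.distrib sum_distrib_left algebra_simps)
  ultimately show ?thesis unfolding EV_def[abs_def] by (rule has_derivative_eq_rhs[OF _ ext])
qed


lemma EV_mY:
  assumes "\<And>a c. k a n c = 0"
  shows "EV n (mY k) \<xi> = \<xi>$2 * EV n k \<xi>"
proof -
  define g where "g a b = (\<Sum>c\<le>n. k a b c * ((\<xi>$1) ^ a * (\<xi>$3) ^ c))" for a b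
  have "\<xi>$2 * EV n k \<xi> = (\<Sum>a\<le>n. \<xi>$2 * (\<Sum>b\<le>n. g a b * (\<xi>$2) ^ b))"
    unfolding EV_def g_def by (simp add: sum_distrib_left sum_distrib_right mult_ac)
  also have "\<dots> = (\<Sum>a\<le>n. (\<Sum>b\<le>n. (if b = 0 then 0 else g a (b - 1)) * (\<xi>$2) ^ b))"
    by (intro sum.cong refl mult_sum) (simp add: g_def assms)
  also have "\<dots> = EV n (mY k) \<xi>"
    unfolding EV_def g_def mY_def by (intro sum.cong refl) (simp add: sum_distrib_left sum_distrib_right mult_ac)
  finally show ?thesis by simp
qed

lemma EV_mZ:
  assumes "\<And>a b. k a b n = 0"
  shows "EV n (mZ k) \<xi> = \<xi>$3 * EV n k \<xi>"
proof -
  have "\<xi>$3 * EV n k \<xi> = (\<Sum>a\<le>n. \<Sum>b\<le>n. (\<xi>$1) ^ a * (\<xi>$2) ^ b * (\<xi>$3 * (\<Sum>c\<le>n. k a b c * (\<xi>$3) ^ c)))"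
    unfolding EV_def by (simp add: sum_distrib_left sum_distrib_right mult_ac)
  also have "\<dots> = (\<Sum>a\<le>n. \<Sum>b\<le>n. (\<xi>$1) ^ a * (\<xi>$2) ^ b * (\<Sum>c\<le>n. (if c = 0 then 0 else k a b (c - 1)) * (\<xi>$3) ^ c))"
    by (intro sum.cong refl arg_cong2[where f = "(*)"] mult_sum) (simp add: assms)
  also have "\<dots> = EV n (mZ k) \<xi>"
    unfolding EV_def mZ_def by (simp add: sum_distrib_left sum_distrib_right mult_ac)
  finally show ?thesis by simp
qed

lemma Lop_split: "Lop k = mY (dX k) + mZ (dY k)"
  by (rule ext)+ (simp add: Lop_def mY_def mZ_def dX_def dY_def)

lemma EV_Lop:
  assumes "homo d k"
  shows "EV d (Lop k) \<xi> = \<xi>$2 * EV d (dX k) \<xi> + \<xi>$3 * EV d (dY k) \<xi>"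
proof -
  have 1: "dX k a d c = 0" for a c using homoD[OF assms, of "Suc a" d c] by (auto simp: dX_def)
  have 2: "dY k a b d = 0" for a b using homoD[OF assms, of a "Suc b" d] by (auto simp: dY_def)
  show ?thesis unfolding Lop_split EV_add EV_mY[of "dX k", OF 1] EV_mZ[of "dY k", OF 2] ..
qed


lemma EV_nested: "EV n k \<xi> = (\<Sum>a\<le>n. (\<Sum>b\<le>n. (\<Sum>c\<le>n. k a b c * (\<xi>$3) ^ c) * (\<xi>$2) ^ b) * (\<xi>$1) ^ a)"
  unfolding EV_def by (simp add: sum_distrib_left sum_distrib_right mult_ac)

lemma EV_vector: "EV n k (vector [x, y, z]) = (\<Sum>a\<le>n. (\<Sum>b\<le>n. (\<Sum>c\<le>n. k a b c * z ^ c) * y ^ b) * x ^ a)"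
  unfolding EV_nested by simp

lemma EV_zero_coeffs:
  assumes "\<And>\<xi>. EV n k \<xi> = 0" "a \<le> n" "b \<le> n" "c \<le> n"
  shows "k a b c = 0"
proof -
  define C where "C a b z = (\<Sum>c\<le>n. k a b c * z ^ c)" for a b and z :: real
  define B where "B a y z = (\<Sum>b\<le>n. C a b z * y ^ b)" for a and y z :: real
  have s1: "\<forall>x. (\<Sum>a\<le>n. B a y z * x ^ a) = 0" for y z
  proof
    fix x
    show "(\<Sum>a\<le>n. B a y z * x ^ a) = 0"
      using assms(1)[of "vector [x, y, z]"] unfolding EV_vector B_def C_def .
  qed
  have s2: "B a y z = 0" for y z
    using Transcendental.polyfun_eq_0[THEN iffD1, OF s1[of y z]] assms(2) by blast
  have s3: "\<forall>y. (\<Sum>b\<le>n. C a b z * y ^ b) = 0" for z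
    using s2 unfolding B_def by blast
  have s4: "C a b z = 0" for z
    using Transcendental.polyfun_eq_0[THEN iffD1, OF s3[of z]] assms(3) by blast
  have s5: "\<forall>z. (\<Sum>c\<le>n. k a b c * z ^ c) = 0"
    using s4 unfolding C_def by blast
  show ?thesis
    using Transcendental.polyfun_eq_0[THEN iffD1, OF s5] assms(4) by blast
qed

lemma EV_homo_zero:
  assumes "homo d k" "\<And>\<xi>. EV d k \<xi> = 0"
  shows "k = 0"
proof (intro ext)
  fix a b c
  show "k a b c = 0 a b c"
  proof (cases "k a b c = 0")
    case False
    then have "a + b + c = d" by (rule homoD[OF assms(1)])
    then show ?thesis using EV_zero_coeffs[OF assms(2), of a b c] by simp
  qed simp
qed

lemma sum_if_le: "(\<Sum>b\<le>(d::nat). if b \<le> m then F b else (0::real)) = sum F {..min d m}"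
proof -
  have "(\<Sum>b\<le>d. if b \<le> m then F b else (0::real)) = sum F {b \<in> {..d}. b \<le> m}"
    by (rule sum.inter_filter[symmetric]) simp
  also have "{b \<in> {..d}. b \<le> m} = {..min d m}" by auto
  finally show ?thesis .
qed

lemma EV_homo_form:
  assumes "homo d k"
  shows "EV d k \<xi> = (\<Sum>i\<le>d. \<Sum>j\<le>d - i. k i j (d - i - j) * (\<xi>$1) ^ i * (\<xi>$2) ^ j * (\<xi>$3) ^ (d - i - j))"
proof -
  let ?m = "\<lambda>a b c. k a b c * ((\<xi>$1) ^ a * (\<xi>$2) ^ b * (\<xi>$3) ^ c)"
  have inner: "(\<Sum>c\<le>d. ?m a b c) = (if b \<le> d - a then ?m a b (d - a - b) else 0)" if "a \<le> d" for a b
  proof (cases "b \<le> d - a")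
    case True
    have "(\<Sum>c\<le>d. ?m a b c) = (\<Sum>c\<le>d. if c = d - a - b then ?m a b c else 0)"
    proof (intro sum.cong refl)
      fix c assume "c \<in> {..d}"
      show "?m a b c = (if c = d - a - b then ?m a b c else 0)"
        using homoD[OF assms, of a b c] by (cases "k a b c = 0") auto
    qed
    also have "\<dots> = ?m a b (d - a - b)" by (simp add: sum.delta')
    finally show ?thesis using True by simp
  next
    case False
    have "(\<Sum>c\<le>d. ?m a b c) = 0"
    proof (intro sum.neutral ballI)
      fix c assume "c \<in> {..d}"
      show "?m a b c = 0" using homoD[OF assms, of a b c] False by (cases "k a b c = 0") auto
    qed
    then show ?thesis using False by simp
  qed
  have "EV d k \<xi> = (\<Sum>a\<le>d. \<Sum>b\<le>d. if b \<le> d - a then ?m a b (d - a - b) else 0)"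
    unfolding EV_def by (intro sum.cong refl) (simp add: inner)
  also have "\<dots> = (\<Sum>a\<le>d. \<Sum>b\<le>min d (d - a). ?m a b (d - a - b))"
    by (rule sum.cong[OF refl], rule sum_if_le)
  also have "\<dots> = (\<Sum>a\<le>d. \<Sum>b\<le>d - a. ?m a b (d - a - b))"
    by simp
  finally show ?thesis by (simp add: mult_ac)
qed

lemma hom_poly3_EV: "homo d k \<Longrightarrow> hom_poly3 d (EV d k)"
  unfolding hom_poly3_def by (rule exI[of _ "\<lambda>i j. k i j (d - i - j)"]) (simp add: EV_homo_form)

lemma hom_poly3_ex:
  assumes "hom_poly3 d p"
  shows "\<exists>k. homo d k \<and> p = EV d k"
proof -
  obtain c where c: "\<And>\<xi>. p \<xi> = (\<Sum>i\<le>d. \<Sum>j\<le>d - i. c i j * (\<xi>$1) ^ i * (\<xi>$2) ^ j * (\<xi>$3) ^ (d - i - j))"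
    using assms unfolding hom_poly3_def by blast
  define k where "k = (\<lambda>a b c'. if a + b + c' = d then c a b else 0)"
  have hk: "homo d k" unfolding homo_def k_def by auto
  have "p \<xi> = EV d k \<xi>" for \<xi>
    unfolding c EV_homo_form[OF hk]
    by (intro sum.cong refl) (auto simp: k_def)
  then show ?thesis using hk by blast
qed




lemma Nmat_mult: "Nmat *v x = vector [x$2, x$3, 0]"
  unfolding Nmat_def
  by (simp add: vec_eq_iff forall_3 matrix_vector_mult_def sum_3)

lemma axis_comp: "(axis k (1::real) :: real^3) $ j = (if j = k then 1 else 0)"
  by (simp add: axis_def)

lemma vec3_decomp: "(v::real^3) = v$1 *\<^sub>R axis 1 1 + v$2 *\<^sub>R axis 2 1 + v$3 *\<^sub>R axis 3 1"
  by (simp add: vec_eq_iff forall_3 axis_comp)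

definition Dk :: "nat \<Rightarrow> cf \<Rightarrow> real^3 \<Rightarrow> real^3 \<Rightarrow> real" where
  "Dk d k \<xi> v = v$1 * EV d (dX k) \<xi> + v$2 * EV d (dY k) \<xi> + v$3 * EV d (dZ k) \<xi>"

lemma field_deriv:
  fixes h :: "real^3 \<Rightarrow> real^3" and \<kappa> :: "3 \<Rightarrow> cf"
  assumes "\<And>j. (\<lambda>\<xi>. h \<xi> $ j) = EV d (\<kappa> j)" "\<And>j. homo d (\<kappa> j)"
  shows "(h has_derivative (\<lambda>v. Dk d (\<kappa> 1) \<xi> v *\<^sub>R axis 1 1 + Dk d (\<kappa> 2) \<xi> v *\<^sub>R axis 2 1 + Dk d (\<kappa> 3) \<xi> v *\<^sub>R axis 3 1)) (at \<xi>)"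
proof -
  have h: "h = (\<lambda>\<xi>. EV d (\<kappa> 1) \<xi> *\<^sub>R axis 1 1 + EV d (\<kappa> 2) \<xi> *\<^sub>R axis 2 1 + EV d (\<kappa> 3) \<xi> *\<^sub>R axis 3 1)"
  proof
    fix \<xi>
    show "h \<xi> = EV d (\<kappa> 1) \<xi> *\<^sub>R axis 1 1 + EV d (\<kappa> 2) \<xi> *\<^sub>R axis 2 1 + EV d (\<kappa> 3) \<xi> *\<^sub>R axis 3 1"
      using vec3_decomp[of "h \<xi>"] fun_cong[OF assms(1)[of 1], of \<xi>] fun_cong[OF assms(1)[of 2], of \<xi>]
        fun_cong[OF assms(1)[of 3], of \<xi>] by simp
  qed
  have d: "(EV d (\<kappa> j) has_derivative Dk d (\<kappa> j) \<xi>) (at \<xi>)" for j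
    unfolding Dk_def[abs_def] by (rule EV_deriv[OF homo_supp[OF assms(2)]])
  show ?thesis unfolding h
    by (intro has_derivative_add has_derivative_scaleR_left d)
qed

lemma adN_comp:
  fixes h :: "real^3 \<Rightarrow> real^3" and \<kappa> :: "3 \<Rightarrow> cf"
  assumes "\<And>j. (\<lambda>\<xi>. h \<xi> $ j) = EV d (\<kappa> j)" "\<And>j. homo d (\<kappa> j)"
  shows "adN h \<xi> $ 1 = EV d (Lop (\<kappa> 1) - \<kappa> 2) \<xi>"
    and "adN h \<xi> $ 2 = EV d (Lop (\<kappa> 2) - \<kappa> 3) \<xi>"
    and "adN h \<xi> $ 3 = EV d (Lop (\<kappa> 3)) \<xi>"
proof -
  have fd: "frechet_derivative h (at \<xi>) = (\<lambda>v. Dk d (\<kappa> 1) \<xi> v *\<^sub>R axis 1 1 + Dk d (\<kappa> 2) \<xi> v *\<^sub>R axis 2 1 + Dk d (\<kappa> 3) \<xi> v *\<^sub>R axis 3 1)"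
    using frechet_derivative_at[OF field_deriv[OF assms]] by simp
  have hc: "h \<xi> $ j = EV d (\<kappa> j) \<xi>" for j using fun_cong[OF assms(1)[of j], of \<xi>] by simp
  have L: "Dk d (\<kappa> j) \<xi> (vector [\<xi>$2, \<xi>$3, 0]) = EV d (Lop (\<kappa> j)) \<xi>" for j
    unfolding Dk_def EV_Lop[OF assms(2)] by simp
  show "adN h \<xi> $ 1 = EV d (Lop (\<kappa> 1) - \<kappa> 2) \<xi>"
    unfolding adN_def fd Nmat_mult by (simp add: axis_comp L[symmetric] EV_diff hc)
  show "adN h \<xi> $ 2 = EV d (Lop (\<kappa> 2) - \<kappa> 3) \<xi>"
    unfolding adN_def fd Nmat_mult by (simp add: axis_comp L[symmetric] EV_diff hc)
  show "adN h \<xi> $ 3 = EV d (Lop (\<kappa> 3)) \<xi>"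
    unfolding adN_def fd Nmat_mult by (simp add: axis_comp L[symmetric] hc)
qed


lemma line_deriv:
  fixes f :: "real^3 \<Rightarrow> real"
  assumes "\<And>x. (f has_derivative D x) (at x)" "\<And>x. linear (D x)"
  shows "deriv (\<lambda>t. f (\<xi> + t *\<^sub>R e)) 0 = D \<xi> e"
proof -
  have g: "((\<lambda>t::real. \<xi> + t *\<^sub>R e) has_derivative (\<lambda>t. t *\<^sub>R e)) (at 0)"
    by (auto intro!: derivative_eq_intros)
  have c: "((\<lambda>t. f (\<xi> + t *\<^sub>R e)) has_derivative (\<lambda>t. D \<xi> (t *\<^sub>R e))) (at 0)"
    using has_derivative_compose[OF g, of f "D \<xi>"] assms(1)[of \<xi>] by simp
  have "(\<lambda>t. D \<xi> (t *\<^sub>R e)) = (*) (D \<xi> e)"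
    using linear_scale[OF assms(2)[of \<xi>]] by (auto simp: mult.commute)
  then have "((\<lambda>t. f (\<xi> + t *\<^sub>R e)) has_field_derivative D \<xi> e) (at 0)"
    using c by (simp add: has_field_derivative_def)
  then show ?thesis by (rule DERIV_imp_deriv)
qed

lemma Dk_linear: "linear (Dk d k \<xi>)"
  unfolding Dk_def by (intro linearI) (simp_all add: algebra_simps)

lemma div_comp:
  fixes v :: "real^3 \<Rightarrow> real^3" and \<kappa> :: "3 \<Rightarrow> cf"
  assumes "\<And>j. (\<lambda>\<xi>. v \<xi> $ j) = EV d (\<kappa> j)" "\<And>j. homo d (\<kappa> j)"
  shows "divergence v \<xi> = EV d (dX (\<kappa> 1) + dY (\<kappa> 2) + dZ (\<kappa> 3)) \<xi>"
proof -
  have vc: "v x $ j = EV d (\<kappa> j) x" for x j using fun_cong[OF assms(1)[of j], of x] by simp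
  have dj: "deriv (\<lambda>t. v (\<xi> + t *\<^sub>R axis j 1) $ j) 0 = Dk d (\<kappa> j) \<xi> (axis j 1)" for j
    unfolding vc
    by (rule line_deriv[of "EV d (\<kappa> j)" "Dk d (\<kappa> j)"]) 
       (auto intro: EV_deriv[OF homo_supp[OF assms(2)], unfolded Dk_def[symmetric, abs_def]] simp: Dk_linear)
  show ?thesis
    unfolding divergence_def sum_3 dj by (simp add: Dk_def axis_comp EV_add)
qed




definition fld :: "nat \<Rightarrow> cf \<Rightarrow> cf \<Rightarrow> cf \<Rightarrow> real^3 \<Rightarrow> real^3" where
  "fld d k1 k2 k3 = (\<lambda>\<xi>. EV d k1 \<xi> *\<^sub>R axis 1 1 + EV d k2 \<xi> *\<^sub>R axis 2 1 + EV d k3 \<xi> *\<^sub>R axis 3 1)"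

definition sel :: "cf \<Rightarrow> cf \<Rightarrow> cf \<Rightarrow> 3 \<Rightarrow> cf" where
  "sel k1 k2 k3 j = (if j = 1 then k1 else if j = 2 then k2 else k3)"

lemma fld_comp: "fld d k1 k2 k3 \<xi> $ 1 = EV d k1 \<xi>" "fld d k1 k2 k3 \<xi> $ 2 = EV d k2 \<xi>" "fld d k1 k2 k3 \<xi> $ 3 = EV d k3 \<xi>"
  by (simp_all add: fld_def axis_comp)

lemma fld_sel: "(\<lambda>\<xi>. fld d k1 k2 k3 \<xi> $ j) = EV d (sel k1 k2 k3 j)"
proof
  fix \<xi>
  show "fld d k1 k2 k3 \<xi> $ j = EV d (sel k1 k2 k3 j) \<xi>"
    using exhaust_3[of j] by (auto simp: fld_comp sel_def)
qed

lemma sel_homo: "homo d k1 \<Longrightarrow> homo d k2 \<Longrightarrow> homo d k3 \<Longrightarrow> homo d (sel k1 k2 k3 j)"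
  by (simp add: sel_def)

lemma fld_F3:
  assumes "homo d k1" "homo d k2" "homo d k3"
  shows "fld d k1 k2 k3 \<in> F3 d"
  unfolding F3_def
proof (intro CollectI allI)
  fix j
  show "hom_poly3 d (\<lambda>\<xi>. fld d k1 k2 k3 \<xi> $ j)"
    unfolding fld_sel by (rule hom_poly3_EV[OF sel_homo[OF assms]])
qed

lemma fld_div:
  assumes "homo d k1" "homo d k2" "homo d k3"
  shows "divergence (fld d k1 k2 k3) \<xi> = EV d (dX k1 + dY k2 + dZ k3) \<xi>"
  using div_comp[OF fld_sel sel_homo[OF assms]] by (simp add: sel_def)

lemma fld_adN:
  assumes "homo d k1" "homo d k2" "homo d k3"
  shows "adN (fld d k1 k2 k3) = fld d (Lop k1 - k2) (Lop k2 - k3) (Lop k3)"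
proof
  fix \<xi>
  note c = adN_comp[OF fld_sel sel_homo[OF assms], of \<xi>]
  show "adN (fld d k1 k2 k3) \<xi> = fld d (Lop k1 - k2) (Lop k2 - k3) (Lop k3) \<xi>"
    using c by (simp add: vec_eq_iff forall_3 fld_comp sel_def)
qed

lemma F3_fld:
  assumes "v \<in> F3 d"
  shows "\<exists>k1 k2 k3. homo d k1 \<and> homo d k2 \<and> homo d k3 \<and> v = fld d k1 k2 k3"
proof -
  have "\<forall>j. \<exists>k. homo d k \<and> (\<lambda>\<xi>. v \<xi> $ j) = EV d k"
    using assms hom_poly3_ex unfolding F3_def by blast
  then obtain \<kappa> where \<kappa>: "\<And>j. homo d (\<kappa> j) \<and> (\<lambda>\<xi>. v \<xi> $ j) = EV d (\<kappa> j)" by metis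
  have "v = fld d (\<kappa> 1) (\<kappa> 2) (\<kappa> 3)"
  proof
    fix \<xi>
    have "v \<xi> $ j = EV d (\<kappa> j) \<xi>" for j using \<kappa>[of j] by (metis (mono_tags))
    then show "v \<xi> = fld d (\<kappa> 1) (\<kappa> 2) (\<kappa> 3) \<xi>"
      by (simp add: vec_eq_iff forall_3 fld_comp)
  qed
  then show ?thesis using \<kappa> by blast
qed

lemma EV_homo_zero':
  assumes "homo m k" "m \<le> n" "\<And>\<xi>. EV n k \<xi> = 0"
  shows "k = 0"
proof (intro ext)
  fix a b c
  show "k a b c = 0 a b c"
  proof (cases "k a b c = 0")
    case False
    then have "a + b + c = m" by (rule homoD[OF assms(1)])
    then show ?thesis using EV_zero_coeffs[OF assms(3), of a b c] assms(2) by simp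
  qed simp
qed

lemma EV_inj:
  assumes "homo d k" "homo d m" "\<And>\<xi>. EV d k \<xi> = EV d m \<xi>"
  shows "k = m"
proof -
  have "k - m = 0" by (rule EV_homo_zero'[OF homo_diff[OF assms(1,2)] order_refl]) (simp add: EV_diff assms(3))
  then show ?thesis by simp
qed

lemma fld_inj:
  assumes "homo d k1" "homo d k2" "homo d k3" "homo d m1" "homo d m2" "homo d m3"
    and "fld d k1 k2 k3 = fld d m1 m2 m3"
  shows "k1 = m1" "k2 = m2" "k3 = m3"
proof -
  have e: "fld d k1 k2 k3 \<xi> $ j = fld d m1 m2 m3 \<xi> $ j" for \<xi> j using assms(7) by simp
  show "k1 = m1" using EV_inj[OF assms(1,4)] e[of _ 1] by (simp add: fld_comp)
  show "k2 = m2" using EV_inj[OF assms(2,5)] e[of _ 2] by (simp add: fld_comp)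
  show "k3 = m3" using EV_inj[OF assms(3,6)] e[of _ 3] by (simp add: fld_comp)
qed

lemma fld_add: "(\<lambda>\<xi>. fld d k1 k2 k3 \<xi> + fld d m1 m2 m3 \<xi>) = fld d (k1 + m1) (k2 + m2) (k3 + m3)"
  by (rule ext) (simp add: vec_eq_iff forall_3 fld_comp EV_add)


lemma dX_zero: "dX 0 = 0" by (rule ext)+ (simp add: dX_def)
lemma dY_zero: "dY 0 = 0" by (rule ext)+ (simp add: dY_def)

lemma adm:
  assumes "dX k1 + dY k2 + dZ k3 = 0"
  shows "dZ (Lop (Lop k1) + Lop k2 + k3) = Lop (Lop (dZ k1) + dY k1 + dY k1 + dZ k2)"
proof -
  have k3: "dZ k3 = - dX k1 - dY k2" using assms by (simp add: algebra_simps eq_neg_iff_add_eq_0)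
  show ?thesis unfolding dZ_add dZ_Lop dY_Lop Lop_add k3 by (simp add: algebra_simps)
qed

lemma EV_zfree:
  assumes "homo d p" "zfree p"
  shows "EV d p \<xi> = (\<Sum>i\<le>d. p i (d - i) 0 * (\<xi>$1) ^ i * (\<xi>$2) ^ (d - i))"
  unfolding EV_homo_form[OF assms(1)]
proof (intro sum.cong refl)
  fix i assume "i \<in> {..d}"
  have "(\<Sum>j\<le>d - i. p i j (d - i - j) * (\<xi>$1) ^ i * (\<xi>$2) ^ j * (\<xi>$3) ^ (d - i - j))
      = (\<Sum>j\<le>d - i. if j = d - i then p i j (d - i - j) * (\<xi>$1) ^ i * (\<xi>$2) ^ j * (\<xi>$3) ^ (d - i - j) else 0)"
  proof (intro sum.cong refl)
    fix j assume "j \<in> {..d - i}"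
    then show "p i j (d - i - j) * (\<xi>$1) ^ i * (\<xi>$2) ^ j * (\<xi>$3) ^ (d - i - j)
      = (if j = d - i then p i j (d - i - j) * (\<xi>$1) ^ i * (\<xi>$2) ^ j * (\<xi>$3) ^ (d - i - j) else 0)"
      using assms(2) unfolding zfree_def by auto
  qed
  also have "\<dots> = p i (d - i) 0 * (\<xi>$1) ^ i * (\<xi>$2) ^ (d - i)" by (simp add: sum.delta')
  finally show "(\<Sum>j\<le>d - i. p i j (d - i - j) * (\<xi>$1) ^ i * (\<xi>$2) ^ j * (\<xi>$3) ^ (d - i - j))
      = p i (d - i) 0 * (\<xi>$1) ^ i * (\<xi>$2) ^ (d - i)" .
qed

lemma fld_W:
  assumes "homo d p" "zfree p"
  shows "fld d 0 0 p \<in> Wd d"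
proof -
  define q where "q = (\<lambda>x y. \<Sum>i\<le>d. p i (d - i) 0 * x ^ i * y ^ (d - i))"
  have "q \<in> P2 d" unfolding P2_def q_def by auto
  moreover have "fld d 0 0 p = (\<lambda>\<xi>. q (\<xi>$1) (\<xi>$2) *\<^sub>R axis 3 1)"
    by (rule ext) (simp add: fld_def EV_zero EV_zfree[OF assms] q_def)
  ultimately show ?thesis unfolding Wd_def by blast
qed

lemma W_fld:
  assumes "w \<in> Wd d"
  shows "\<exists>p. homo d p \<and> zfree p \<and> w = fld d 0 0 p"
proof -
  obtain q where q: "q \<in> P2 d" "w = (\<lambda>\<xi>. q (\<xi>$1) (\<xi>$2) *\<^sub>R axis 3 1)"
    using assms unfolding Wd_def by blast
  obtain c where c: "\<And>x y. q x y = (\<Sum>i\<le>d. c i * x ^ i * y ^ (d - i))"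
    using q(1) unfolding P2_def by blast
  define p :: cf where "p = (\<lambda>a b c'. if c' = 0 \<and> a + b = d then c a else 0)"
  have hp: "homo d p" unfolding homo_def p_def by auto
  have zp: "zfree p" unfolding zfree_def p_def by auto
  have e: "EV d p \<xi> = (\<Sum>i\<le>d. c i * (\<xi>$1) ^ i * (\<xi>$2) ^ (d - i))" for \<xi>
    unfolding EV_zfree[OF hp zp] by (intro sum.cong refl) (simp add: p_def)
  have "w = fld d 0 0 p"
    unfolding q(2) by (rule ext) (simp add: fld_def EV_zero e c)
  then show ?thesis using hp zp by blast
qed

lemma V3_fld:
  assumes "homo d k1" "homo d k2" "homo d k3"
  shows "fld d k1 k2 k3 \<in> V3 d \<longleftrightarrow> (\<forall>\<xi>. EV d (dX k1 + dY k2 + dZ k3) \<xi> = 0)"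
  unfolding V3_def using fld_F3[OF assms] fld_div[OF assms] by auto


lemma W_sub_V: "Wd d \<subseteq> V3 d"
proof
  fix w assume "w \<in> Wd d"
  then obtain p where p: "homo d p" "zfree p" "w = fld d 0 0 p" using W_fld by blast
  show "w \<in> V3 d" unfolding p(3)
    by (subst V3_fld[OF homo_zero homo_zero p(1)]) (simp add: dX_zero dY_zero zfree_dZ0[OF p(2)] EV_zero)
qed

lemma zero_fld: "(\<lambda>\<xi>. 0 :: real^3) = fld d 0 0 0"
  by (rule ext) (simp add: fld_def EV_zero)

lemma inter_part: "(adN ` F3 d \<inter> V3 d) \<inter> Wd d = {(\<lambda>\<xi>. 0)}"
proof
  show "(adN ` F3 d \<inter> V3 d) \<inter> Wd d \<subseteq> {(\<lambda>\<xi>. 0)}"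
  proof
    fix r assume r: "r \<in> (adN ` F3 d \<inter> V3 d) \<inter> Wd d"
    then obtain h where h: "h \<in> F3 d" "r = adN h" by blast
    obtain k1 k2 k3 where k: "homo d k1" "homo d k2" "homo d k3" "h = fld d k1 k2 k3"
      using F3_fld[OF h(1)] by blast
    obtain p where p: "homo d p" "zfree p" "r = fld d 0 0 p" using W_fld r by blast
    have eq: "fld d (Lop k1 - k2) (Lop k2 - k3) (Lop k3) = fld d 0 0 p"
      using h(2) p(3) fld_adN[OF k(1-3)] k(4) by simp
    have hh: "homo d (Lop k1 - k2)" "homo d (Lop k2 - k3)" "homo d (Lop k3)"
      using k by (auto intro: homo_diff homo_Lop)
    note i = fld_inj[OF hh homo_zero homo_zero p(1) eq]
    have "k2 = Lop k1" "k3 = Lop k2" using i(1,2) by simp_all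
    then have "Lop (Lop (Lop k1)) = p" using i(3) by simp
    then have "p = 0" using U_core p(2) by blast
    then show "r \<in> {(\<lambda>\<xi>. 0)}" using p(3) zero_fld by simp
  qed
next
  have z: "(\<lambda>\<xi>. 0 :: real^3) = adN (fld d 0 0 0)"
    unfolding fld_adN[OF homo_zero homo_zero homo_zero] by (simp add: Lop_zero zero_fld)
  have "(\<lambda>\<xi>. 0 :: real^3) \<in> adN ` F3 d"
    using z fld_F3[OF homo_zero homo_zero homo_zero] by blast
  moreover have "(\<lambda>\<xi>. 0 :: real^3) \<in> Wd d"
  proof -
    have "fld d 0 0 0 \<in> Wd d" by (rule fld_W[OF homo_zero]) (simp add: zfree_def)
    then show ?thesis using zero_fld[of d] by simp
  qed
  moreover then have "(\<lambda>\<xi>. 0 :: real^3) \<in> V3 d" using W_sub_V by blast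
  ultimately show "{(\<lambda>\<xi>. 0)} \<subseteq> (adN ` F3 d \<inter> V3 d) \<inter> Wd d" by blast
qed

lemma sum_part:
  assumes "1 \<le> d"
  shows "V3 d = {(\<lambda>\<xi>. r \<xi> + w \<xi>) | r w. r \<in> adN ` F3 d \<inter> V3 d \<and> w \<in> Wd d}"
proof
  show "V3 d \<subseteq> {(\<lambda>\<xi>. r \<xi> + w \<xi>) | r w. r \<in> adN ` F3 d \<inter> V3 d \<and> w \<in> Wd d}"
  proof
    fix v assume v: "v \<in> V3 d"
    then have "v \<in> F3 d" unfolding V3_def by blast
    then obtain k1 k2 k3 where k: "homo d k1" "homo d k2" "homo d k3" "v = fld d k1 k2 k3"
      using F3_fld by blast
    obtain d' where d': "d = Suc d'" using assms by (cases d) auto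
    have hdiv: "homo d' (dX k1 + dY k2 + dZ k3)"
      using k(1-3) unfolding d' by (intro homo_add homo_dX homo_dY homo_dZ)
    have ev0: "\<forall>\<xi>. EV d (dX k1 + dY k2 + dZ k3) \<xi> = 0" using v k V3_fld by blast
    have le: "d' \<le> d" using d' by simp
    have div0: "dX k1 + dY k2 + dZ k3 = 0"
      by (rule EV_homo_zero'[OF hdiv le]) (use ev0 in blast)
    define u where "u = Lop (Lop k1) + Lop k2 + k3"
    have hu: "homo d u" unfolding u_def using k(1-3) by (intro homo_add homo_Lop)
    have "dZ u = Lop (Lop (dZ k1) + dY k1 + dY k1 + dZ k2)" unfolding u_def by (rule adm[OF div0])
    then obtain f p where fp: "homo d f" "homo d p" "zfree p" "Lop (Lop (Lop f)) = u - p"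
      using E_core[OF hu] by blast
    define h2 where "h2 = Lop f - k1"
    define h3 where "h3 = Lop h2 - k2"
    have hh: "homo d h2" "homo d h3" unfolding h2_def h3_def using fp(1) k(1-3)
      by (auto intro: homo_diff homo_Lop)
    define r where "r = adN (fld d f h2 h3)"
    have l3: "Lop h3 = k3 - p"
      unfolding h3_def h2_def Lop_diff fp(4) u_def by (simp add: algebra_simps)
    have rf: "r = fld d k1 k2 (k3 - p)"
      unfolding r_def fld_adN[OF fp(1) hh] l3 by (simp add: h2_def h3_def)
    have hk3p: "homo d (k3 - p)" using k(3) fp(2) by (rule homo_diff)
    have rF: "r \<in> adN ` F3 d" unfolding r_def using fld_F3[OF fp(1) hh] by blast
    have rV: "r \<in> V3 d"
      unfolding rf V3_fld[OF k(1,2) hk3p]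
      using \<open>\<forall>\<xi>. EV d (dX k1 + dY k2 + dZ k3) \<xi> = 0\<close>
      by (simp add: dZ_diff zfree_dZ0[OF fp(3)] div0 EV_zero)
    have wW: "fld d 0 0 p \<in> Wd d" by (rule fld_W[OF fp(2,3)])
    have "v = (\<lambda>\<xi>. r \<xi> + fld d 0 0 p \<xi>)"
      unfolding rf fld_add k(4) by simp
    then show "v \<in> {(\<lambda>\<xi>. r \<xi> + w \<xi>) | r w. r \<in> adN ` F3 d \<inter> V3 d \<and> w \<in> Wd d}"
      using rF rV wW by blast
  qed
next
  show "{(\<lambda>\<xi>. r \<xi> + w \<xi>) | r w. r \<in> adN ` F3 d \<inter> V3 d \<and> w \<in> Wd d} \<subseteq> V3 d"
  proof
    fix s assume "s \<in> {(\<lambda>\<xi>. r \<xi> + w \<xi>) | r w. r \<in> adN ` F3 d \<inter> V3 d \<and> w \<in> Wd d}"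
    then obtain r w where rw: "s = (\<lambda>\<xi>. r \<xi> + w \<xi>)" "r \<in> V3 d" "w \<in> Wd d" by blast
    then have "r \<in> F3 d" unfolding V3_def by blast
    then obtain a1 a2 a3 where a: "homo d a1" "homo d a2" "homo d a3" "r = fld d a1 a2 a3"
      using F3_fld by blast
    obtain p where p: "homo d p" "zfree p" "w = fld d 0 0 p" using W_fld rw(3) by blast
    have dv: "\<forall>\<xi>. EV d (dX a1 + dY a2 + dZ a3) \<xi> = 0" using rw(2) a V3_fld by blast
    have s: "s = fld d (a1 + 0) (a2 + 0) (a3 + p)" unfolding rw(1) a(4) p(3) fld_add ..
    show "s \<in> V3 d" unfolding s
      using V3_fld[OF homo_add[OF a(1) homo_zero] homo_add[OF a(2) homo_zero] homo_add[OF a(3) p(1)]] dv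
      by (simp add: dZ_add zfree_dZ0[OF p(2)])
  qed
qed

theorem lemma10:
  fixes d :: nat
  assumes "d \<ge> 1"
  shows "Wd d \<subseteq> V3 d
    \<and> (adN ` F3 d \<inter> V3 d) \<inter> Wd d = {(\<lambda>\<xi>. 0)}
    \<and> V3 d = {(\<lambda>\<xi>. r \<xi> + w \<xi>) | r w. r \<in> adN ` F3 d \<inter> V3 d \<and> w \<in> Wd d}"
  using W_sub_V inter_part sum_part[OF assms] by blast


end
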